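(* Under the hypotheses of the previous lemma (standing assumptions, SLC and BUC, each $B_k$ nonnegative doubly stochastic scrambling with nonzero entries at least a fixed $\kappa>0$), and assuming the step sizes satisfy $\alpha_k>0$, $\alpha_{k+1}\le\alpha_k$, $\sum_k\alpha_k=\infty$ and $\sum_k\alpha_k^2<\infty$, one has $$\sum_{k=0}^\infty\alpha_k\max_J\|\delta^J_k\|<\infty,$$ where $\delta^J_k=x^J_{0,k}-\frac1S\sum_{I=1}^S x^I_{0,k}$.
   Context: Standing setup. Integers $S\ge1$ (servers), $C\ge1$ (clients), $D\ge1$, $\Delta\ge1$. $\mathcal{X}\subseteq\mathbb{R}^D$ is a nonempty convex compact set and $\mathcal{P}_{\mathcal{X}}$ is Euclidean projection onto $\mathcal{X}$. For $h=1,\dots,C$, $f_h:\mathbb{R}^D\to\mathbb{R}$ is continuously differentiable and convex with gradient $g_h$; there are constants $L_h$ with $\|g_h(x)\|\le L_h$ for all $x\in\mathcal{X}$ and constants $N_h>0$ with $\|g_h(x)-g_h(y)\|\le N_h\|x-y\|$ for all $x,y\in\mathcal{X}$. Norms are Euclidean. Weight matrices $W_{i,k}\in\mathbb{R}^{S\times C}$ ($0\le i\le\Delta-1$, $k\ge0$), entries possibly negative. Symmetric Learning Condition (SLC): there is $M>0$ with $\sum_{i=1}^{\Delta}\sum_{J=1}^S W_{i-1,k}[J,h]=M$ for all $k\ge0$ and all $h$. Bounded Update Condition (BUC): there is $\bar M>0$ with $\sum_{i=1}^{\Delta}\sum_{J=1}^S |W_{i-1,k}[J,h]|\le\bar M$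 for all $k,h$. Consensus matrices $B_k\in\mathbb{R}^{S\times S}$ have nonnegative entries. Iteration: given $x^J_{0,0}\in\mathcal{X}$ ($J=1,\dots,S$), for each $k\ge0$ and $i=1,\dots,\Delta$, $x^J_{i,k}=\mathcal{P}_{\mathcal{X}}\big[x^J_{i-1,k}-\alpha_k\sum_{h=1}^C W_{i-1,k}[J,h]\,g_h(x^J_{i-1,k})\big]$, and then $x^I_{0,k+1}=\sum_{J=1}^S B_k[I,J]\,x^J_{\Delta,k}$. A square matrix $B$ is scrambling if for every two rows $I,G$ there is a column $J$ with $B[I,J]>0$ and $B[G,J]>0$. *)

theory Defs
  imports "HOL-Analysis.Analysis"
begin

text \<open>Square matrices over index set {1..n} represented as functions nat => nat => real.\<close>

definition scrambling :: "nat \<Rightarrow> (nat \<Rightarrow> nat \<Rightarrow> real) \<Rightarrow> bool" where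
  "scrambling n B \<longleftrightarrow>
     (\<forall>I\<in>{1..n}. \<forall>G\<in>{1..n}. \<exists>J\<in>{1..n}. B I J > 0 \<and> B G J > 0)"

definition doubly_stochastic :: "nat \<Rightarrow> (nat \<Rightarrow> nat \<Rightarrow> real) \<Rightarrow> bool" where
  "doubly_stochastic n B \<longleftrightarrow>
     (\<forall>I\<in>{1..n}. \<forall>J\<in>{1..n}. B I J \<ge> 0) \<and>
     (\<forall>I\<in>{1..n}. (\<Sum>J=1..n. B I J) = 1) \<and>
     (\<forall>J\<in>{1..n}. (\<Sum>I=1..n. B I J) = 1)"

text \<open>Disagreement of server J at the start of round k.\<close>
definition delta :: "nat \<Rightarrow> (nat \<Rightarrow> nat \<Rightarrow> nat \<Rightarrow> 'a::real_vector) \<Rightarrow> nat \<Rightarrow> nat \<Rightarrow> 'a" where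
  "delta S x J k = x J 0 k - (1 / real S) *\<^sub>R (\<Sum>I=1..S. x I 0 k)"

end

theory Submission
  imports Defs
begin

lemma rec_summable:
  fixes a b :: "nat \<Rightarrow> real"
  assumes a0: "\<And>k. 0 \<le> a k" and ar: "\<And>k. a (Suc k) \<le> \<rho> * a k + b k"
    and bs: "summable b" and b0: "\<And>k. 0 \<le> b k" and r0: "0 \<le> \<rho>" and r1: "\<rho> < 1"
  shows "summable a"
proof (rule summableI_nonneg_bounded[where x="(a 0 + suminf b)/(1-\<rho>)"])
  show "0 \<le> a n" for n by (rule a0)
  fix n
  have sb: "sum b {..<m} \<le> suminf b" for m using sum_le_suminf[OF bs] b0 by auto
  have sbn: "0 \<le> suminf b" using suminf_nonneg[OF bs] b0 by auto
  show "sum a {..<n} \<le> (a 0 + suminf b)/(1-\<rho>)"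
  proof (cases n)
    case 0 then show ?thesis using a0[of 0] sbn r1 by simp
  next
    case (Suc m)
    have "sum a {..<Suc m} = a 0 + (\<Sum>k<m. a (Suc k))" by (rule sum.lessThan_Suc_shift)
    also have "\<dots> \<le> a 0 + (\<Sum>k<m. \<rho> * a k + b k)" using ar by (intro add_left_mono sum_mono) auto
    also have "\<dots> = a 0 + \<rho> * sum a {..<m} + sum b {..<m}" by (simp add: sum.distrib sum_distrib_left)
    also have "\<dots> \<le> a 0 + \<rho> * sum a {..<Suc m} + suminf b"
      using sb[of m] mult_nonneg_nonneg[OF r0 a0[of m]] by (simp add: distrib_left)
    finally have "(1-\<rho>) * sum a {..<Suc m} \<le> a 0 + suminf b" by (simp add: algebra_simps)
    then show ?thesis using Suc r1 by (simp add: field_simps)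
  qed
qed

lemma contract:
  fixes y :: "nat \<Rightarrow> 'a::real_normed_vector" and B :: "nat \<Rightarrow> nat \<Rightarrow> real"
  assumes ds: "doubly_stochastic S B" and scr: "scrambling S B"
    and kap: "\<And>I J. I \<in> {1..S} \<Longrightarrow> J \<in> {1..S} \<Longrightarrow> B I J \<noteq> 0 \<Longrightarrow> B I J \<ge> \<kappa>"
    and D: "\<And>J K. J \<in> {1..S} \<Longrightarrow> K \<in> {1..S} \<Longrightarrow> norm (y J - y K) \<le> D"
    and I: "I \<in> {1..S}" and G: "G \<in> {1..S}"
  shows "norm ((\<Sum>J=1..S. B I J *\<^sub>R y J) - (\<Sum>J=1..S. B G J *\<^sub>R y J)) \<le> (1-\<kappa>) * D"
proof -
  define m where "m J = min (B I J) (B G J)" for J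
  define a where "a J = B I J - m J" for J
  define b where "b J = B G J - m J" for J
  define t where "t = 1 - (\<Sum>J=1..S. m J)"
  have nn: "\<And>J. J \<in> {1..S} \<Longrightarrow> 0 \<le> B I J \<and> 0 \<le> B G J" using ds I G unfolding doubly_stochastic_def by auto
  have rI: "(\<Sum>J=1..S. B I J) = 1" and rG: "(\<Sum>J=1..S. B G J) = 1"
    using ds I G unfolding doubly_stochastic_def by auto
  have a0: "\<And>J. 0 \<le> a J" and b0: "\<And>J. 0 \<le> b J" unfolding a_def b_def m_def by auto
  have m0: "\<And>J. J \<in> {1..S} \<Longrightarrow> 0 \<le> m J" using nn unfolding m_def by auto
  have sa: "(\<Sum>J=1..S. a J) = t" unfolding a_def t_def using rI by (simp add: sum_subtractf)
  have sb: "(\<Sum>J=1..S. b J) = t" unfolding b_def t_def using rG by (simp add: sum_subtractf)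
  have sa': "sum a {Suc 0..S} = t" and sb': "sum b {Suc 0..S} = t" using sa sb by simp_all
  have t0: "0 \<le> t" using sa a0 by (metis sum_nonneg)
  obtain J0 where J0: "J0 \<in> {1..S}" "B I J0 > 0" "B G J0 > 0" using scr I G unfolding scrambling_def by blast
  have "m J0 \<ge> \<kappa>" using kap[OF I J0(1)] kap[OF G J0(1)] J0 unfolding m_def by auto
  moreover have "m J0 \<le> (\<Sum>J=1..S. m J)" using J0(1) m0 by (intro member_le_sum) auto
  ultimately have tk: "t \<le> 1 - \<kappa>" unfolding t_def by linarith
  define v where "v = (\<Sum>J=1..S. a J *\<^sub>R y J) - (\<Sum>J=1..S. b J *\<^sub>R y J)"
  have veq: "(\<Sum>J=1..S. B I J *\<^sub>R y J) - (\<Sum>J=1..S. B G J *\<^sub>R y J) = v"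
    unfolding v_def a_def b_def by (simp add: scaleR_diff_left sum_subtractf)
  have D0: "0 \<le> D" using D[OF I I] by simp
  have tv: "t *\<^sub>R v = (\<Sum>J=1..S. \<Sum>K=1..S. (a J * b K) *\<^sub>R (y J - y K))"
  proof -
    have "(\<Sum>J=1..S. \<Sum>K=1..S. (a J * b K) *\<^sub>R (y J - y K))
       = (\<Sum>J=1..S. \<Sum>K=1..S. (b K * a J) *\<^sub>R y J) - (\<Sum>J=1..S. \<Sum>K=1..S. (a J * b K) *\<^sub>R y K)"
      by (simp add: scaleR_diff_right sum_subtractf mult.commute)
    also have "(\<Sum>J=1..S. \<Sum>K=1..S. (b K * a J) *\<^sub>R y J) = t *\<^sub>R (\<Sum>J=1..S. a J *\<^sub>R y J)"
      by (simp add: scaleR_sum_left[symmetric] sum_distrib_right[symmetric] sb sb' scaleR_sum_right)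
    also have "(\<Sum>J=1..S. \<Sum>K=1..S. (a J * b K) *\<^sub>R y K) = (\<Sum>K=1..S. \<Sum>J=1..S. (a J * b K) *\<^sub>R y K)"
      by (rule sum.swap)
    also have "\<dots> = t *\<^sub>R (\<Sum>K=1..S. b K *\<^sub>R y K)"
      by (simp add: scaleR_sum_left[symmetric] sum_distrib_right[symmetric] sa sa' scaleR_sum_right)
    finally show ?thesis unfolding v_def by (simp add: scaleR_diff_right)
  qed
  have "norm (t *\<^sub>R v) \<le> (\<Sum>J=1..S. \<Sum>K=1..S. norm ((a J * b K) *\<^sub>R (y J - y K)))"
    unfolding tv by (rule order_trans[OF norm_sum sum_mono[OF norm_sum]])
  also have "\<dots> \<le> (\<Sum>J=1..S. \<Sum>K=1..S. (a J * b K) * D)"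
    using a0 b0 D by (intro sum_mono) (simp add: mult_left_mono)
  also have "\<dots> = t * t * D"
    by (simp add: sum_distrib_right[symmetric] sum_distrib_left[symmetric] sa sb sa' sb')
  finally have ntv: "t * norm v \<le> t * (t * D)" using t0 by simp
  show ?thesis
  proof (cases "t = 0")
    case True
    have "\<forall>J\<in>{1..S}. a J = 0" using sa True a0 by (simp add: sum_nonneg_eq_0_iff)
    moreover have "\<forall>J\<in>{1..S}. b J = 0" using sb True b0 by (simp add: sum_nonneg_eq_0_iff)
    ultimately have "v = 0" unfolding v_def by simp
    then show ?thesis using veq tk t0 D0 by simp
  next
    case False
    then have "norm v \<le> t * D" using ntv t0 by simp
    also have "\<dots> \<le> (1-\<kappa>) * D" using tk D0 by (simp add: mult_right_mono)
    finally show ?thesis using veq by simp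
  qed
qed
theorem mainTheorem4:
  fixes S C \<Delta> :: nat
    and X :: "'a::euclidean_space set"
    and f :: "nat \<Rightarrow> 'a \<Rightarrow> real" and g :: "nat \<Rightarrow> 'a \<Rightarrow> 'a"
    and L N :: "nat \<Rightarrow> real"
    and W :: "nat \<Rightarrow> nat \<Rightarrow> nat \<Rightarrow> nat \<Rightarrow> real"
    and B :: "nat \<Rightarrow> nat \<Rightarrow> nat \<Rightarrow> real"
    and M Mbar \<kappa> :: real
    and \<alpha> :: "nat \<Rightarrow> real"
    and x :: "nat \<Rightarrow> nat \<Rightarrow> nat \<Rightarrow> 'a"
  assumes S_pos: "S \<ge> 1" and C_pos: "C \<ge> 1" and Delta_pos: "\<Delta> \<ge> 1"
    and X_ne: "X \<noteq> {}" and X_convex: "convex X" and X_compact: "compact X"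
    and f_deriv: "\<And>h z. h \<in> {1..C} \<Longrightarrow> (f h has_derivative (\<lambda>v. g h z \<bullet> v)) (at z)"
    and g_cont: "\<And>h. h \<in> {1..C} \<Longrightarrow> continuous_on UNIV (g h)"
    and f_convex: "\<And>h. h \<in> {1..C} \<Longrightarrow> convex_on UNIV (f h)"
    and g_bound: "\<And>h z. h \<in> {1..C} \<Longrightarrow> z \<in> X \<Longrightarrow> norm (g h z) \<le> L h"
    and N_pos: "\<And>h. h \<in> {1..C} \<Longrightarrow> N h > 0"
    and g_lip: "\<And>h y z. h \<in> {1..C} \<Longrightarrow> y \<in> X \<Longrightarrow> z \<in> X \<Longrightarrow>
                  norm (g h y - g h z) \<le> N h * norm (y - z)"
    and SLC: "M > 0" "\<And>k h. h \<in> {1..C} \<Longrightarrow>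
                 (\<Sum>i=1..\<Delta>. \<Sum>J=1..S. W (i - 1) k J h) = M"
    and BUC: "Mbar > 0" "\<And>k h. h \<in> {1..C} \<Longrightarrow>
                 (\<Sum>i=1..\<Delta>. \<Sum>J=1..S. \<bar>W (i - 1) k J h\<bar>) \<le> Mbar"
    and B_ds: "\<And>k. doubly_stochastic S (B k)"
    and B_scr: "\<And>k. scrambling S (B k)"
    and kappa_pos: "\<kappa> > 0"
    and B_kappa: "\<And>k I J. I \<in> {1..S} \<Longrightarrow> J \<in> {1..S} \<Longrightarrow> B k I J \<noteq> 0 \<Longrightarrow> B k I J \<ge> \<kappa>"
    and alpha_pos: "\<And>k. \<alpha> k > 0"
    and alpha_mono: "\<And>k. \<alpha> (Suc k) \<le> \<alpha> k"
    and alpha_div: "\<not> summable \<alpha>"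
    and alpha_sq: "summable (\<lambda>k. (\<alpha> k)\<^sup>2)"
    and x_init: "\<And>J. J \<in> {1..S} \<Longrightarrow> x J 0 0 \<in> X"
    and x_step: "\<And>k i J. i \<in> {1..\<Delta>} \<Longrightarrow> J \<in> {1..S} \<Longrightarrow>
        x J i k = closest_point X
          (x J (i - 1) k - \<alpha> k *\<^sub>R (\<Sum>h=1..C. W (i - 1) k J h *\<^sub>R g h (x J (i - 1) k)))"
    and x_cons: "\<And>k I. I \<in> {1..S} \<Longrightarrow>
        x I 0 (Suc k) = (\<Sum>J=1..S. B k I J *\<^sub>R x J \<Delta> k)"
  shows "summable (\<lambda>k. \<alpha> k * (MAX J\<in>{1..S}. norm (delta S x J k)))"
proof -
  have clX: "closed X" using X_compact compact_imp_closed by blast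
  have L0: "\<And>h. h \<in> {1..C} \<Longrightarrow> 0 \<le> L h"
  proof -
    fix h assume h: "h \<in> {1..C}"
    obtain z where "z \<in> X" using X_ne by blast
    then show "0 \<le> L h" using g_bound[OF h, of z] norm_ge_zero order_trans by blast
  qed
  have xXi: "\<And>i k J. i \<in> {1..\<Delta>} \<Longrightarrow> J \<in> {1..S} \<Longrightarrow> x J i k \<in> X"
    using x_step closest_point_in_set[OF clX X_ne] by simp
  have xX0: "\<And>k J. J \<in> {1..S} \<Longrightarrow> x J 0 k \<in> X"
  proof -
    fix k J assume J: "J \<in> {1..S}"
    show "x J 0 k \<in> X"
    proof (cases k)
      case 0 then show ?thesis using x_init J by simp
    next
      case (Suc k')
      have "(\<Sum>I=1..S. B k' J I *\<^sub>R x I \<Delta> k') \<in> X"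
        apply (rule convex_sum[OF _ X_convex])
        using B_ds[of k'] J xXi[of \<Delta>] Delta_pos unfolding doubly_stochastic_def by auto
      then show ?thesis using x_cons[OF J] Suc by simp
    qed
  qed
  have xX: "\<And>i k J. i \<le> \<Delta> \<Longrightarrow> J \<in> {1..S} \<Longrightarrow> x J i k \<in> X"
    using xX0 xXi by (metis atLeastAtMost_iff not_gr0 Suc_le_eq One_nat_def)
  define st where "st i k J = \<alpha> k * (\<Sum>h=1..C. \<bar>W (i - 1) k J h\<bar> * L h)" for i k J
  have step: "\<And>i k J. i \<in> {1..\<Delta>} \<Longrightarrow> J \<in> {1..S} \<Longrightarrow> norm (x J i k - x J (i - 1) k) \<le> st i k J"
  proof -
    fix i k J assume i: "i \<in> {1..\<Delta>}" and J: "J \<in> {1..S}"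
    define z where "z = x J (i - 1) k"
    define v where "v = \<alpha> k *\<^sub>R (\<Sum>h=1..C. W (i - 1) k J h *\<^sub>R g h z)"
    have zX: "z \<in> X" unfolding z_def using xX i J by auto
    have "norm (x J i k - z) = dist (closest_point X (z - v)) (closest_point X z)"
      using x_step[OF i J] closest_point_self[OF zX] unfolding z_def v_def by (simp add: dist_norm)
    also have "\<dots> \<le> dist (z - v) z" by (rule closest_point_lipschitz[OF X_convex clX X_ne])
    also have "\<dots> = norm v" by (simp add: dist_norm)
    also have "\<dots> = \<alpha> k * norm (\<Sum>h=1..C. W (i - 1) k J h *\<^sub>R g h z)"
      unfolding v_def using alpha_pos[of k] by simp
    also have "\<dots> \<le> st i k J" unfolding st_def
    proof (rule mult_left_mono[OF _ less_imp_le[OF alpha_pos]])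
      have "norm (\<Sum>h=1..C. W (i - 1) k J h *\<^sub>R g h z) \<le> (\<Sum>h=1..C. norm (W (i - 1) k J h *\<^sub>R g h z))"
        by (rule norm_sum)
      also have "\<dots> \<le> (\<Sum>h=1..C. \<bar>W (i - 1) k J h\<bar> * L h)"
        using g_bound zX by (intro sum_mono) (simp add: mult_left_mono)
      finally show "norm (\<Sum>h=1..C. W (i - 1) k J h *\<^sub>R g h z) \<le> (\<Sum>h=1..C. \<bar>W (i - 1) k J h\<bar> * L h)" .
    qed
    finally show "norm (x J i k - x J (i - 1) k) \<le> st i k J" unfolding z_def .
  qed
  have tele: "\<And>n k J. n \<le> \<Delta> \<Longrightarrow> J \<in> {1..S} \<Longrightarrow> norm (x J n k - x J 0 k) \<le> (\<Sum>i=1..n. st i k J)"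
  proof -
    fix n k J assume n: "n \<le> \<Delta>" and J: "J \<in> {1..S}"
    from n show "norm (x J n k - x J 0 k) \<le> (\<Sum>i=1..n. st i k J)"
    proof (induction n)
      case 0 then show ?case by simp
    next
      case (Suc n)
      have "norm (x J (Suc n) k - x J 0 k) \<le> norm (x J (Suc n) k - x J n k) + norm (x J n k - x J 0 k)"
        by (rule order_trans[OF _ norm_triangle_ineq]) simp
      also have "\<dots> \<le> st (Suc n) k J + (\<Sum>i=1..n. st i k J)"
        using step[of "Suc n" J k] Suc J by (intro add_mono) auto
      finally show ?case by simp
    qed
  qed
  define Gc where "Gc = Mbar * (\<Sum>h=1..C. L h)"
  have Gc0: "0 \<le> Gc" unfolding Gc_def using BUC(1) L0 by (intro mult_nonneg_nonneg sum_nonneg) auto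
  have drift: "\<And>k J. J \<in> {1..S} \<Longrightarrow> norm (x J \<Delta> k - x J 0 k) \<le> \<alpha> k * Gc"
  proof -
    fix k J assume J: "J \<in> {1..S}"
    have "(\<Sum>i=1..\<Delta>. st i k J) = \<alpha> k * (\<Sum>h=1..C. L h * (\<Sum>i=1..\<Delta>. \<bar>W (i - 1) k J h\<bar>))"
      unfolding st_def by (simp add: sum_distrib_left sum_distrib_right mult.commute mult.left_commute) (rule sum.swap)
    also have "\<dots> \<le> \<alpha> k * (\<Sum>h=1..C. L h * Mbar)"
    proof (intro mult_left_mono[OF _ less_imp_le[OF alpha_pos]] sum_mono mult_left_mono)
      fix h assume h: "h \<in> {1..C}"
      show "0 \<le> L h" using L0 h .
      have "(\<Sum>i=1..\<Delta>. \<bar>W (i - 1) k J h\<bar>) \<le> (\<Sum>i=1..\<Delta>. \<Sum>J'=1..S. \<bar>W (i - 1) k J' h\<bar>)"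
        using J by (intro sum_mono member_le_sum) auto
      then show "(\<Sum>i=1..\<Delta>. \<bar>W (i - 1) k J h\<bar>) \<le> Mbar" using BUC(2)[OF h, of k] by linarith
    qed
    also have "\<dots> = \<alpha> k * Gc" unfolding Gc_def by (simp add: sum_distrib_left mult.commute)
    finally show "norm (x J \<Delta> k - x J 0 k) \<le> \<alpha> k * Gc" using tele[of \<Delta> J k] J by simp
  qed
  define d where "d k = Max ((\<lambda>(I,G). norm (x I 0 k - x G 0 k)) ` ({1..S}\<times>{1..S}))" for k
  have fin: "finite ((\<lambda>(I,G). norm (x I 0 k - x G 0 k)) ` ({1..S}\<times>{1..S}))" for k by simp
  have ne: "((\<lambda>(I,G). norm (x I 0 k - x G 0 k)) ` ({1..S}\<times>{1..S})) \<noteq> {}" for k using S_pos by auto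
  have d_ge: "\<And>k I G. I \<in> {1..S} \<Longrightarrow> G \<in> {1..S} \<Longrightarrow> norm (x I 0 k - x G 0 k) \<le> d k"
    unfolding d_def by (rule Max_ge[OF fin]) auto
  have d0: "0 \<le> d k" for k using d_ge[of 1 1 k] S_pos by simp
  have d_le: "\<And>k D. (\<And>I G. I \<in> {1..S} \<Longrightarrow> G \<in> {1..S} \<Longrightarrow> norm (x I 0 k - x G 0 k) \<le> D) \<Longrightarrow> d k \<le> D"
    unfolding d_def using fin ne by (auto simp: Max_le_iff)
  have kap1: "\<kappa> \<le> 1"
  proof -
    have one: "(1::nat) \<in> {1..S}" using S_pos by simp
    obtain J where J: "J \<in> {1..S}" "B 0 1 J > 0" using B_scr[of 0] one unfolding scrambling_def by blast
    have "B 0 1 J \<le> (\<Sum>J=1..S. B 0 1 J)" using J B_ds[of 0] one unfolding doubly_stochastic_def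
      by (intro member_le_sum) auto
    also have "\<dots> = 1" using B_ds[of 0] one unfolding doubly_stochastic_def by auto
    finally show ?thesis using B_kappa[OF one J(1), of 0] J by simp
  qed
  have d_rec: "\<And>k. d (Suc k) \<le> (1 - \<kappa>) * (d k + 2 * Gc * \<alpha> k)"
  proof -
    fix k
    show "d (Suc k) \<le> (1 - \<kappa>) * (d k + 2 * Gc * \<alpha> k)"
    proof (rule d_le)
      fix I G assume I: "I \<in> {1..S}" and G: "G \<in> {1..S}"
      have Dy: "norm (x J \<Delta> k - x K \<Delta> k) \<le> d k + 2 * Gc * \<alpha> k" if J: "J \<in> {1..S}" and K: "K \<in> {1..S}" for J K
      proof -
        have "norm (x J \<Delta> k - x K \<Delta> k) = norm ((x J \<Delta> k - x J 0 k) + (x J 0 k - x K 0 k) - (x K \<Delta> k - x K 0 k))"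
          by (rule arg_cong[where f=norm]) simp
        moreover have "norm ((x J \<Delta> k - x J 0 k) + (x J 0 k - x K 0 k) - (x K \<Delta> k - x K 0 k)) \<le> norm ((x J \<Delta> k - x J 0 k) + (x J 0 k - x K 0 k)) + norm (x K \<Delta> k - x K 0 k)"
          by (rule norm_triangle_ineq4)
        moreover have "norm ((x J \<Delta> k - x J 0 k) + (x J 0 k - x K 0 k)) \<le> norm (x J \<Delta> k - x J 0 k) + norm (x J 0 k - x K 0 k)"
          by (rule norm_triangle_ineq)
        ultimately have "norm (x J \<Delta> k - x K \<Delta> k) \<le> norm (x J \<Delta> k - x J 0 k) + norm (x J 0 k - x K 0 k) + norm (x K \<Delta> k - x K 0 k)"
          by linarith
        then show ?thesis using drift[OF J, of k] drift[OF K, of k] d_ge[OF J K, of k] by (simp add: algebra_simps)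
      qed
      have "norm ((\<Sum>J=1..S. B k I J *\<^sub>R x J \<Delta> k) - (\<Sum>J=1..S. B k G J *\<^sub>R x J \<Delta> k)) \<le> (1 - \<kappa>) * (d k + 2 * Gc * \<alpha> k)"
        by (rule contract[OF B_ds B_scr B_kappa Dy I G])
      then show "norm (x I 0 (Suc k) - x G 0 (Suc k)) \<le> (1 - \<kappa>) * (d k + 2 * Gc * \<alpha> k)"
        using x_cons[OF I] x_cons[OF G] by simp
    qed
  qed
  define a where "a k = \<alpha> k * d k" for k
  have sa: "summable a"
  proof (rule rec_summable[where \<rho>="1-\<kappa>" and b="\<lambda>k. 2 * (1-\<kappa>) * Gc * (\<alpha> k)\<^sup>2"])
    show "0 \<le> a k" for k unfolding a_def using alpha_pos[of k] d0[of k] by simp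
    show "summable (\<lambda>k. 2 * (1-\<kappa>) * Gc * (\<alpha> k)\<^sup>2)" using alpha_sq by (rule summable_mult)
    show "0 \<le> 2 * (1-\<kappa>) * Gc * (\<alpha> k)\<^sup>2" for k using kap1 Gc0 by simp
    show "0 \<le> 1 - \<kappa>" using kap1 by simp
    show "1 - \<kappa> < 1" using kappa_pos by simp
    fix k
    have "a (Suc k) \<le> \<alpha> k * d (Suc k)" unfolding a_def using alpha_mono[of k] d0 by (simp add: mult_right_mono)
    also have "\<dots> \<le> \<alpha> k * ((1 - \<kappa>) * (d k + 2 * Gc * \<alpha> k))"
      using d_rec[of k] alpha_pos[of k] by (simp add: mult_left_mono)
    also have "\<dots> = (1 - \<kappa>) * a k + 2 * (1-\<kappa>) * Gc * (\<alpha> k)\<^sup>2"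
      unfolding a_def by (simp add: algebra_simps power2_eq_square)
    finally show "a (Suc k) \<le> (1 - \<kappa>) * a k + 2 * (1-\<kappa>) * Gc * (\<alpha> k)\<^sup>2" .
  qed
  have dl: "\<And>k J. J \<in> {1..S} \<Longrightarrow> norm (delta S x J k) \<le> d k"
  proof -
    fix k J assume J: "J \<in> {1..S}"
    have Sr: "real S > 0" using S_pos by simp
    have "delta S x J k = (1 / real S) *\<^sub>R (\<Sum>I=1..S. x J 0 k - x I 0 k)"
      unfolding delta_def using Sr by (simp add: sum_subtractf scaleR_diff_right sum_constant_scaleR)
    then have "norm (delta S x J k) = (1 / real S) * norm (\<Sum>I=1..S. x J 0 k - x I 0 k)" using Sr by simp
    also have "\<dots> \<le> (1 / real S) * (\<Sum>I=1..S. norm (x J 0 k - x I 0 k))"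
      using Sr by (intro mult_left_mono norm_sum) auto
    also have "\<dots> \<le> (1 / real S) * (\<Sum>I=1..S. d k)"
      using Sr d_ge J by (intro mult_left_mono sum_mono) auto
    also have "\<dots> = d k" using Sr by simp
    finally show "norm (delta S x J k) \<le> d k" .
  qed
  show ?thesis
  proof (rule summable_comparison_test'[OF sa])
    fix k
    have fn: "finite ((\<lambda>J. norm (delta S x J k)) ` {1..S})" and nn: "(\<lambda>J. norm (delta S x J k)) ` {1..S} \<noteq> {}"
      using S_pos by auto
    have m0: "0 \<le> (MAX J\<in>{1..S}. norm (delta S x J k))"
      using Max_ge[OF fn, of "norm (delta S x 1 k)"] S_pos by (meson atLeastAtMost_iff imageI le_refl norm_ge_zero order_trans)
    have "(MAX J\<in>{1..S}. norm (delta S x J k)) \<le> d k" using dl fn nn by (simp add: Max_le_iff)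
    then show "norm (\<alpha> k * (MAX J\<in>{1..S}. norm (delta S x J k))) \<le> a k"
      unfolding a_def using alpha_pos[of k] m0 by (simp add: abs_mult mult_left_mono)
  qed
qed

end
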